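(* Let $\mathcal{K}$ be a set of finite subsets of $\mathcal{G}$ satisfying (K$_{\supseteq}^{\mathrm{fin}}$) and (K$_{\mathrm{AddPair}}$). Then $\mathcal{K}$ satisfies (K$_{\mathrm{Add}}$): if $A_1,\ldots,A_n\in\mathcal{K}$ and for each $\langle g_1,\ldots,g_n\rangle\in A_1\times\cdots\times A_n$, $f_{\langle g_1,\ldots,g_n\rangle}$ is some member of $\mathrm{posi}(\{g_1,\ldots,g_n\})$, then $\{f_{\langle g_1,\ldots,g_n\rangle}:\langle g_1,\ldots,g_n\rangle\in A_1\times\cdots\times A_n\}\in\mathcal{K}$.
   Context: $\Omega$ is a non-empty set and $\mathcal{G}$ is the set of bounded functions $\Omega\to\mathbb{R}$. $\mathrm{posi}(B)=\{\sum_{i=1}^m\lambda_i h_i: m\geq1,\lambda_i>0,h_i\in B\}$. Here all gamble sets are finite. (K$_{\supseteq}^{\mathrm{fin}}$): if $A\in\mathcal{K}$ and $B\supseteq A$ is a finite subset of $\mathcal{G}$, then $B\in\mathcal{K}$. (K$_{\mathrm{AddPair}}$): if $A_1,A_2\in\mathcal{K}$ and for each pair $g_1\in A_1,g_2\in A_2$, $f_{\langle g_1,g_2\rangle}$ is some member of $\mathrm{posi}(\{g_1,g_2\})$, then $\{f_{\langle g_1,g_2\rangle}: g_1\in A_1,g_2\in A_2\}\in\mathcal{K}$. *)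

theory Defs
  imports Complex_Main
begin

text \<open>Omega is modelled by a type variable 'w (types are nonempty).
  Gambles: bounded real-valued functions on 'w.\<close>

definition gambles :: "('w \<Rightarrow> real) set" where
  "gambles = {f. \<exists>B. \<forall>w. \<bar>f w\<bar> \<le> B}"

definition posi :: "('w \<Rightarrow> real) set \<Rightarrow> ('w \<Rightarrow> real) set" where
  "posi B = {(\<lambda>w. \<Sum>i<m. lam i * h i w) | (m::nat) lam h.
      m \<ge> 1 \<and> (\<forall>i<m. lam i > 0 \<and> h i \<in> B)}"

definition finite_gamble_sets :: "('w \<Rightarrow> real) set set \<Rightarrow> bool" where
  "finite_gamble_sets K \<longleftrightarrow> (\<forall>A\<in>K. finite A \<and> A \<subseteq> gambles)"

definition K_supset_fin :: "('w \<Rightarrow> real) set set \<Rightarrow> bool" where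
  "K_supset_fin K \<longleftrightarrow>
     (\<forall>A\<in>K. \<forall>B. finite B \<and> B \<subseteq> gambles \<and> A \<subseteq> B \<longrightarrow> B \<in> K)"

definition K_AddPair :: "('w \<Rightarrow> real) set set \<Rightarrow> bool" where
  "K_AddPair K \<longleftrightarrow>
     (\<forall>A1\<in>K. \<forall>A2\<in>K. \<forall>f.
        (\<forall>g1\<in>A1. \<forall>g2\<in>A2. f g1 g2 \<in> posi {g1, g2}) \<longrightarrow>
        {f g1 g2 | g1 g2. g1 \<in> A1 \<and> g2 \<in> A2} \<in> K)"

text \<open>K_Add: for any list As = [A_1,...,A_n] of members of K and any choice function f on
  tuples (lists gs with gs!i in A_i) with f gs in posi(set gs), the image set lies in K.\<close>
definition K_Add :: "('w \<Rightarrow> real) set set \<Rightarrow> bool" where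
  "K_Add K \<longleftrightarrow>
     (\<forall>As f. As \<noteq> [] \<and> (\<forall>A\<in>set As. A \<in> K) \<and>
        (\<forall>gs\<in>listset As. f gs \<in> posi (set gs)) \<longrightarrow>
        f ` listset As \<in> K)"

end

theory Submission imports Defs begin

lemma posi_iff: "x \<in> posi B \<longleftrightarrow> (\<exists>(m::nat) lam h. x = (\<lambda>w. \<Sum>i<m. lam i * h i w) \<and> m \<ge> 1 \<and> (\<forall>i<m. lam i > 0 \<and> h i \<in> B))"
  unfolding posi_def by blast

lemma posi_mem: "x \<in> B \<Longrightarrow> x \<in> posi B"
  unfolding posi_iff by (rule exI[of _ 1], rule exI[of _ "\<lambda>_. 1"], rule exI[of _ "\<lambda>_. x"]) auto

lemma posi_mono: "B \<subseteq> C \<Longrightarrow> posi B \<subseteq> posi C"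
  unfolding posi_def by blast

lemma posi_gambles: assumes "B \<subseteq> gambles" shows "posi B \<subseteq> gambles"
proof
  fix x assume "x \<in> posi B"
  then obtain m :: nat and lam h where x: "x = (\<lambda>w. \<Sum>i<m. lam i * h i w)" and h: "\<forall>i<m. lam i > 0 \<and> h i \<in> B"
    unfolding posi_iff by blast
  have "\<forall>i<m. \<exists>b. \<forall>w. \<bar>h i w\<bar> \<le> b" using h assms unfolding gambles_def by blast
  then obtain bd where bd: "\<forall>i<m. \<forall>w. \<bar>h i w\<bar> \<le> bd i" by metis
  have "\<forall>w. \<bar>x w\<bar> \<le> (\<Sum>i<m. lam i * bd i)"
  proof
    fix w
    have "\<bar>x w\<bar> \<le> (\<Sum>i<m. \<bar>lam i * h i w\<bar>)" unfolding x by (rule sum_abs)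
    also have "\<dots> \<le> (\<Sum>i<m. lam i * bd i)"
    proof (rule sum_mono)
      fix i assume "i \<in> {..<m}"
      then have "lam i > 0" "\<bar>h i w\<bar> \<le> bd i" using h bd by auto
      then show "\<bar>lam i * h i w\<bar> \<le> lam i * bd i" by (simp add: abs_mult)
    qed
    finally show "\<bar>x w\<bar> \<le> (\<Sum>i<m. lam i * bd i)" .
  qed
  then show "x \<in> gambles" unfolding gambles_def by blast
qed

lemma posi_finite_sum:
  fixes c :: "'i \<Rightarrow> real"
  assumes "finite J" "J \<noteq> {}" "\<forall>j\<in>J. c j > 0 \<and> g j \<in> B"
  shows "(\<lambda>w. \<Sum>j\<in>J. c j * g j w) \<in> posi B"
proof -
  obtain e where e: "bij_betw e {0..<card J} J" using ex_bij_betw_nat_finite assms(1) by blast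
  have sumeq: "(\<Sum>j\<in>J. c j * g j w) = (\<Sum>i<card J. c (e i) * g (e i) w)" for w
    using sum.reindex_bij_betw[OF e, of "\<lambda>j. c j * g j w"] by (simp add: lessThan_atLeast0)
  have "card J \<ge> 1" using assms(1,2) by (simp add: Suc_leI card_gt_0_iff)
  moreover have "\<forall>i<card J. c (e i) > 0 \<and> g (e i) \<in> B"
    using assms(3) e by (auto simp: bij_betw_def)
  ultimately show ?thesis unfolding posi_iff sumeq
    by (intro exI[of _ "card J"] exI[of _ "\<lambda>i. c (e i)"] exI[of _ "\<lambda>i. g (e i)"]) simp
qed

lemma posi_decomp:
  assumes t: "t \<in> posi (insert a B)" and B: "B \<noteq> {}"
  shows "\<exists>d\<in>posi B. t \<in> posi {a, d}"
proof -
  obtain m :: nat and lam h where tx: "t = (\<lambda>w. \<Sum>i<m. lam i * h i w)" and m: "m \<ge> 1"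
    and h: "\<forall>i<m. lam i > 0 \<and> h i \<in> insert a B"
    using t unfolding posi_iff by blast
  define I where "I = {i\<in>{..<m}. h i = a}"
  define J where "J = {i\<in>{..<m}. h i \<noteq> a}"
  have fin: "finite I" "finite J" unfolding I_def J_def by auto
  have split: "t w = (\<Sum>i\<in>I. lam i * h i w) + (\<Sum>i\<in>J. lam i * h i w)" for w
  proof -
    have "{..<m} = I \<union> J" "I \<inter> J = {}" unfolding I_def J_def by auto
    then show ?thesis unfolding tx using sum.union_disjoint[OF fin] by simp
  qed
  show ?thesis
  proof (cases "J = {}")
    case True
    obtain b where b: "b \<in> B" using B by blast
    have "\<forall>i<m. lam i > 0 \<and> h i \<in> {a, b}" using h True unfolding J_def by auto
    then have "t \<in> posi {a, b}" unfolding posi_iff using tx m by blast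
    moreover have "b \<in> posi B" using b by (rule posi_mem)
    ultimately show ?thesis by blast
  next
    case Jne: False
    show ?thesis
    proof (cases "I = {}")
      case True
      have "\<forall>i<m. lam i > 0 \<and> h i \<in> B" using h True unfolding I_def by auto
      then have "t \<in> posi B" unfolding posi_iff using tx m by blast
      moreover have "t \<in> posi {a, t}" by (rule posi_mem) simp
      ultimately show ?thesis by blast
    next
      case Ine: False
      define d where "d = (\<lambda>w. \<Sum>i\<in>J. lam i * h i w)"
      have dB: "d \<in> posi B" unfolding d_def
        by (rule posi_finite_sum[OF fin(2) Jne]) (use h in \<open>auto simp: J_def\<close>)
      define mu where "mu = (\<Sum>i\<in>I. lam i)"
      have mu: "mu > 0" unfolding mu_def
        by (rule sum_pos[OF fin(1) Ine]) (auto simp: I_def h)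
      have teq: "t = (\<lambda>w. mu * a w + 1 * d w)"
      proof
        fix w
        have "(\<Sum>i\<in>I. lam i * h i w) = (\<Sum>i\<in>I. lam i * a w)" by (rule sum.cong) (auto simp: I_def)
        then show "t w = mu * a w + 1 * d w" using split[of w] by (simp add: mu_def d_def sum_distrib_right)
      qed
      have "t \<in> posi {a, d}"
        unfolding posi_iff
        apply (rule exI[of _ 2], rule exI[of _ "\<lambda>i. if i = 0 then mu else 1"], rule exI[of _ "\<lambda>i. if i = 0 then a else d"])
        using mu teq by (simp add: numeral_2_eq_2)
      with dB show ?thesis by blast
    qed
  qed
qed

lemma listset_finite: "\<forall>A\<in>set As. finite A \<Longrightarrow> finite (listset As)"
proof (induction As)
  case Nil then show ?case by simp
next
  case (Cons A As)
  have "set_Cons A (listset As) = (\<lambda>(x, xs). x # xs) ` (A \<times> listset As)"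
    by (auto simp: set_Cons_def)
  then show ?case using Cons by simp
qed

lemma listset_empty: "listset As = {} \<Longrightarrow> \<exists>A\<in>set As. A = {}"
  by (induction As) (auto simp: set_Cons_def)

lemma listset_length: "gs \<in> listset As \<Longrightarrow> length gs = length As"
  by (induction As arbitrary: gs) (auto simp: set_Cons_def)

lemma listset_set: "gs \<in> listset As \<Longrightarrow> (\<forall>A\<in>set As. A \<subseteq> G) \<Longrightarrow> set gs \<subseteq> G"
  by (induction As arbitrary: gs) (auto simp: set_Cons_def, blast+)

lemma step:
  assumes fg: "finite_gamble_sets K" and sup: "K_supset_fin K" and ap: "K_AddPair K"
    and Va: "V \<union> {a} \<in> K" and T: "finite T" "T \<subseteq> gambles"
    and D: "D \<in> K" "D \<noteq> {}" and DT: "\<forall>d\<in>D. \<exists>t\<in>T. t \<in> posi {a, d}"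
  shows "V \<union> T \<in> K"
proof -
  have Vfin: "finite (V \<union> {a})" "V \<union> {a} \<subseteq> gambles" using fg Va unfolding finite_gamble_sets_def by auto
  have supI: "\<And>B. finite B \<Longrightarrow> B \<subseteq> gambles \<Longrightarrow> V \<union> {a} \<subseteq> B \<Longrightarrow> B \<in> K"
    using sup Va unfolding K_supset_fin_def by blast
  show ?thesis
  proof (cases "a \<in> V \<union> T")
    case True
    then show ?thesis using Vfin T by (intro supI) auto
  next
    case False
    define X where "X = V \<union> T \<union> {a}"
    have XK: "X \<in> K" unfolding X_def using Vfin T by (intro supI) auto
    define tau where "tau d = (SOME t. t \<in> T \<and> t \<in> posi {a, d})" for d
    have tau: "tau d \<in> T \<and> tau d \<in> posi {a, d}" if "d \<in> D" for d
      unfolding tau_def using DT that by (metis (no_types, lifting) someI_ex)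
    define F where "F z d = (if z = a then tau d else z)" for z d
    have "\<forall>g1\<in>X. \<forall>g2\<in>D. F g1 g2 \<in> posi {g1, g2}"
      using tau by (auto simp: F_def intro: posi_mem)
    then have "{F g1 g2 | g1 g2. g1 \<in> X \<and> g2 \<in> D} \<in> K"
      using ap XK D(1) unfolding K_AddPair_def by blast
    moreover have "{F g1 g2 | g1 g2. g1 \<in> X \<and> g2 \<in> D} = V \<union> T"
    proof
      show "{F g1 g2 | g1 g2. g1 \<in> X \<and> g2 \<in> D} \<subseteq> V \<union> T"
        using tau by (auto simp: F_def X_def)
    next
      obtain d0 where "d0 \<in> D" using D(2) by blast
      then show "V \<union> T \<subseteq> {F g1 g2 | g1 g2. g1 \<in> X \<and> g2 \<in> D}"
        using False unfolding F_def X_def by force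
    qed
    ultimately show ?thesis by simp
  qed
qed

lemma main_aux:
  assumes fg: "finite_gamble_sets K" and sup: "K_supset_fin K" and ap: "K_AddPair K"
  shows "As \<noteq> [] \<Longrightarrow> \<forall>A\<in>set As. A \<in> K \<Longrightarrow> \<forall>gs\<in>listset As. f gs \<in> posi (set gs)
         \<Longrightarrow> f ` listset As \<in> K"
proof (induction As arbitrary: f)
  case Nil then show ?case by simp
next
  case (Cons A As')
  show ?case
  proof (cases "listset (A # As') = {}")
    case True
    then obtain B where "B \<in> set (A # As')" "B = {}" using listset_empty by blast
    then show ?thesis using Cons.prems True by auto
  next
    case ne: False
    have AK: "A \<in> K" using Cons.prems by simp
    have Afin: "finite A" "A \<subseteq> gambles" using fg AK unfolding finite_gamble_sets_def by auto
    have Lne: "listset As' \<noteq> {}" using ne by (auto simp: set_Cons_def)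
    have Lfin: "finite (listset As')"
      using Cons.prems fg unfolding finite_gamble_sets_def by (intro listset_finite) auto
    have Lg: "set gs \<subseteq> gambles" if "gs \<in> listset (A # As')" for gs
      using Cons.prems fg that unfolding finite_gamble_sets_def by (intro listset_set[of gs "A # As'"]) auto
    have Lcons: "a # gs \<in> listset (A # As')" if "a \<in> A" "gs \<in> listset As'" for a gs
      using that by (simp add: set_Cons_def)
    define T where "T a = (\<lambda>gs. f (a # gs)) ` listset As'" for a
    have Tfin: "finite (T a)" for a unfolding T_def using Lfin by simp
    have Tg: "T a \<subseteq> gambles" if "a \<in> A" for a
    proof
      fix t assume "t \<in> T a"
      then obtain gs where gs: "gs \<in> listset As'" "t = f (a # gs)" unfolding T_def by blast
      then have "t \<in> posi (set (a # gs))" using Cons.prems(3) Lcons[OF that] by blast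
      then show "t \<in> gambles" using posi_gambles[OF Lg[OF Lcons[OF that gs(1)]]] by blast
    qed
    have key: "\<exists>D\<in>K. D \<noteq> {} \<and> (\<forall>d\<in>D. \<exists>t\<in>T a. t \<in> posi {a, d})" if a: "a \<in> A" for a
    proof (cases "As' = []")
      case True
      have Ta: "T a = {f [a]}" unfolding T_def using True by simp
      have "f [a] \<in> posi {a}" using Cons.prems(3) a True by simp
      then have "\<forall>d\<in>A. f [a] \<in> posi {a, d}" using posi_mono[of "{a}"] by blast
      then show ?thesis using AK a Ta by blast
    next
      case False
      define dd where "dd gs = (SOME d. d \<in> posi (set gs) \<and> f (a # gs) \<in> posi {a, d})" for gs
      have dd: "dd gs \<in> posi (set gs) \<and> f (a # gs) \<in> posi {a, dd gs}" if gs: "gs \<in> listset As'" for gs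
      proof -
        have "set gs \<noteq> {}" using listset_length[OF gs] False by auto
        moreover have "f (a # gs) \<in> posi (insert a (set gs))"
          using bspec[OF Cons.prems(3) Lcons[OF a gs]] by simp
        ultimately have "\<exists>d\<in>posi (set gs). f (a # gs) \<in> posi {a, d}" by (rule posi_decomp[rotated])
        then show ?thesis unfolding dd_def by (metis (no_types, lifting) someI_ex)
      qed
      have "dd ` listset As' \<in> K"
      proof -
        have "\<forall>gs\<in>listset As'. dd gs \<in> posi (set gs)" using dd by blast
        moreover have "\<forall>A\<in>set As'. A \<in> K" using Cons.prems(2) by simp
        ultimately show ?thesis using Cons.IH[OF False] by blast
      qed
      moreover have "\<forall>d\<in>dd ` listset As'. \<exists>t\<in>T a. t \<in> posi {a, d}"
      proof
        fix d assume "d \<in> dd ` listset As'"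
        then obtain gs where gs: "gs \<in> listset As'" "d = dd gs" by blast
        then have "f (a # gs) \<in> T a" unfolding T_def by blast
        then show "\<exists>t\<in>T a. t \<in> posi {a, d}" using dd[OF gs(1)] gs(2) by blast
      qed
      moreover have "dd ` listset As' \<noteq> {}" using Lne by simp
      ultimately show ?thesis by (intro bexI[of _ "dd ` listset As'"]) auto
    qed
    have loop: "Y \<subseteq> A \<longrightarrow> (A - Y) \<union> \<Union>(T ` Y) \<in> K" if "finite Y" for Y
      using that
    proof (induction Y rule: finite_induct)
      case empty then show ?case using AK by simp
    next
      case (insert a Y)
      show ?case
      proof
        assume sub: "insert a Y \<subseteq> A"
        then have a: "a \<in> A" by simp
        define V where "V = (A - insert a Y) \<union> \<Union>(T ` Y)"
        have "V \<union> {a} = (A - Y) \<union> \<Union>(T ` Y)" unfolding V_def using a insert.hyps(2) by auto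
        then have VaK: "V \<union> {a} \<in> K" using insert.IH sub by simp
        obtain D where D: "D \<in> K" "D \<noteq> {}" "\<forall>d\<in>D. \<exists>t\<in>T a. t \<in> posi {a, d}" using key[OF a] by blast
        have "V \<union> T a \<in> K" by (rule step[OF fg sup ap VaK Tfin Tg[OF a] D])
        moreover have "V \<union> T a = (A - insert a Y) \<union> \<Union>(T ` insert a Y)" unfolding V_def by auto
        ultimately show "(A - insert a Y) \<union> \<Union>(T ` insert a Y) \<in> K" by simp
      qed
    qed
    have "(A - A) \<union> \<Union>(T ` A) \<in> K" using loop[OF Afin(1)] by simp
    moreover have "(A - A) \<union> \<Union>(T ` A) = f ` listset (A # As')"
    proof
      show "(A - A) \<union> \<Union>(T ` A) \<subseteq> f ` listset (A # As')"
        unfolding T_def using Lcons by auto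
    next
      show "f ` listset (A # As') \<subseteq> (A - A) \<union> \<Union>(T ` A)"
      proof
        fix x assume "x \<in> f ` listset (A # As')"
        then obtain a gs where "a \<in> A" "gs \<in> listset As'" "x = f (a # gs)"
          by (auto simp: set_Cons_def)
        then show "x \<in> (A - A) \<union> \<Union>(T ` A)" unfolding T_def by blast
      qed
    qed
    ultimately show ?thesis by simp
  qed
qed

theorem mainTheorem5:
  fixes K :: "('w \<Rightarrow> real) set set"
  assumes "finite_gamble_sets K"
    and "K_supset_fin K"
    and "K_AddPair K"
  shows "K_Add K"
  unfolding K_Add_def using main_aux[OF assms] by blast

end
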